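(* For every $n\ge 3$, the local metric dimension of the convex polytope graph $U_n$ is $lmd(U_n)=2$.
   Context: For $n\ge 3$, $U_n$ is the graph with vertex set $\{a_i,b_i,c_i,d_i,e_i : 1\le i\le n\}$ and edge set $\{a_ia_{i+1}, b_ib_{i+1}, e_ie_{i+1}, a_ib_i, b_ic_i, c_id_i, d_ie_i, c_{i+1}d_i : 1\le i\le n\}$, indices taken modulo $n$. A vertex $w$ resolves $u,v$ if $d(u,w)\neq d(v,w)$ ($d$ the graph distance). A set $W$ is a local resolving set if every two adjacent vertices are resolved by some element of $W$; $lmd(G)$ is the minimum cardinality of a local resolving set of $G$. *)

theory Defs
  imports Main
begin

(* Generic simple graph: vertex set V and symmetric adjacency relation Adj
   (edges only between vertices of V). *)

fun walk_len :: "('a \<Rightarrow> 'a \<Rightarrow> bool) \<Rightarrow> nat \<Rightarrow> 'a \<Rightarrow> 'a \<Rightarrow> bool" where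
  "walk_len Adj 0 u v = (u = v)"
| "walk_len Adj (Suc k) u v = (\<exists>w. Adj u w \<and> walk_len Adj k w v)"

(* graph distance: length of a shortest walk (graphs considered are connected) *)
definition gdist :: "('a \<Rightarrow> 'a \<Rightarrow> bool) \<Rightarrow> 'a \<Rightarrow> 'a \<Rightarrow> nat" where
  "gdist Adj u v = (LEAST k. walk_len Adj k u v)"

definition resolves :: "('a \<Rightarrow> 'a \<Rightarrow> bool) \<Rightarrow> 'a \<Rightarrow> 'a \<Rightarrow> 'a \<Rightarrow> bool" where
  "resolves Adj w u v \<longleftrightarrow> gdist Adj u w \<noteq> gdist Adj v w"

definition local_resolving_set :: "'a set \<Rightarrow> ('a \<Rightarrow> 'a \<Rightarrow> bool) \<Rightarrow> 'a set \<Rightarrow> bool" where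
  "local_resolving_set V Adj W \<longleftrightarrow> W \<subseteq> V \<and>
     (\<forall>u\<in>V. \<forall>v\<in>V. Adj u v \<longrightarrow> (\<exists>w\<in>W. resolves Adj w u v))"

definition lmd :: "'a set \<Rightarrow> ('a \<Rightarrow> 'a \<Rightarrow> bool) \<Rightarrow> nat" where
  "lmd V Adj = (LEAST k. \<exists>W. finite W \<and> local_resolving_set V Adj W \<and> card W = k)"

(* The convex polytope graph U_n; vertex x_i is (X, i) with indices 0..n-1 *)
datatype vkind = A | B | C | D | E

definition U_verts :: "nat \<Rightarrow> (vkind \<times> nat) set" where
  "U_verts n = {(t, i). i < n}"

definition U_arc :: "nat \<Rightarrow> vkind \<times> nat \<Rightarrow> vkind \<times> nat \<Rightarrow> bool" where
  "U_arc n x y \<longleftrightarrow> (case (x, y) of ((t, i), (s, j)) \<Rightarrow> i < n \<and> j < n \<and>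
     ((t = A \<and> s = A \<and> j = (i + 1) mod n)
    \<or> (t = B \<and> s = B \<and> j = (i + 1) mod n)
    \<or> (t = E \<and> s = E \<and> j = (i + 1) mod n)
    \<or> (t = A \<and> s = B \<and> j = i)
    \<or> (t = B \<and> s = C \<and> j = i)
    \<or> (t = C \<and> s = D \<and> j = i)
    \<or> (t = D \<and> s = E \<and> j = i)
    \<or> (t = C \<and> s = D \<and> i = (j + 1) mod n)))"

definition U_adj :: "nat \<Rightarrow> vkind \<times> nat \<Rightarrow> vkind \<times> nat \<Rightarrow> bool" where
  "U_adj n x y \<longleftrightarrow> U_arc n x y \<or> U_arc n y x"

end

theory Submission
  imports Defs
begin

definition nxt :: "nat \<Rightarrow> nat \<Rightarrow> nat" where
  "nxt n i = (if Suc i = n then 0 else Suc i)"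
definition prv :: "nat \<Rightarrow> nat \<Rightarrow> nat" where
  "prv n i = (if i = 0 then n - 1 else i - 1)"

fun nbrs :: "nat \<Rightarrow> vkind \<times> nat \<Rightarrow> (vkind \<times> nat) list" where
  "nbrs n (A, i) = [(A, prv n i), (A, nxt n i), (B, i)]"
| "nbrs n (B, i) = [(B, prv n i), (B, nxt n i), (A, i), (C, i)]"
| "nbrs n (C, i) = [(B, i), (D, i), (D, prv n i)]"
| "nbrs n (D, i) = [(C, i), (C, nxt n i), (E, i)]"
| "nbrs n (E, i) = [(E, prv n i), (E, nxt n i), (D, i)]"

lemma mod_nxt: "i < n \<Longrightarrow> (i + 1) mod n = nxt n i"
  unfolding nxt_def
  by (metis Suc_eq_plus1 Suc_lessI mod_less mod_self)

lemma nxt_prv: "i < n \<Longrightarrow> j < n \<Longrightarrow> (i = nxt n j) \<longleftrightarrow> (j = prv n i)"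
  unfolding nxt_def prv_def by auto

lemma nxt_lt: "i < n \<Longrightarrow> nxt n i < n" unfolding nxt_def by auto
lemma prv_lt: "i < n \<Longrightarrow> prv n i < n" unfolding prv_def by auto
lemma nxt_prv_id[simp]: "i < n \<Longrightarrow> nxt n (prv n i) = i" unfolding nxt_def prv_def by auto
lemma prv_nxt_id[simp]: "i < n \<Longrightarrow> prv n (nxt n i) = i" unfolding nxt_def prv_def by auto

lemma arc_simp: "U_arc n (t,i) (s,j) \<longleftrightarrow> i < n \<and> j < n \<and>
     ((t = A \<and> s = A \<and> j = nxt n i)
    \<or> (t = B \<and> s = B \<and> j = nxt n i)
    \<or> (t = E \<and> s = E \<and> j = nxt n i)
    \<or> (t = A \<and> s = B \<and> j = i)
    \<or> (t = B \<and> s = C \<and> j = i)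
    \<or> (t = C \<and> s = D \<and> j = i)
    \<or> (t = D \<and> s = E \<and> j = i)
    \<or> (t = C \<and> s = D \<and> i = nxt n j))"
proof (cases "i < n \<and> j < n")
  case True
  have e1: "(i + 1) mod n = nxt n i" using True mod_nxt by blast
  have e3: "(j + 1) mod n = nxt n j" using True mod_nxt by blast
  show ?thesis unfolding U_arc_def e1[symmetric] e3[symmetric] by simp
next
  case False
  then have "\<not> i < n \<or> \<not> j < n" by blast
  then show ?thesis by (elim disjE) (simp_all add: U_arc_def)
qed

lemma nxt_prv_D: "i < n \<Longrightarrow> j < n \<Longrightarrow> i = nxt n j \<Longrightarrow> j = prv n i"
  by simp

lemma adj_nbrs: "U_adj n (t,i) (s,j) \<Longrightarrow> i < n \<and> (s,j) \<in> set (nbrs n (t,i))"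
  unfolding U_adj_def arc_simp by (cases t) (auto simp: nxt_lt)

lemma nbrs_adj: "i < n \<Longrightarrow> y \<in> set (nbrs n (t,i)) \<Longrightarrow> U_adj n (t,i) y"
  unfolding U_adj_def by (cases t) (auto simp: arc_simp nxt_lt prv_lt)

lemma nbrs_lt: "i < n \<Longrightarrow> (s,j) \<in> set (nbrs n (t,i)) \<Longrightarrow> j < n"
  by (cases t) (auto simp: nxt_lt prv_lt)

lemma adj_sym: "U_adj n x y \<Longrightarrow> U_adj n y x"
  unfolding U_adj_def by auto

lemma gdist_pot:
  fixes f :: "vkind \<times> nat \<Rightarrow> nat"
  assumes lip: "\<And>t i y. i < n \<Longrightarrow> y \<in> set (nbrs n (t,i)) \<Longrightarrow> f y \<le> f (t,i) + 1"
  and desc: "\<And>t i. i < n \<Longrightarrow> (t,i) \<noteq> w \<Longrightarrow> \<exists>y\<in>set (nbrs n (t,i)). f (t,i) = f y + 1"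
  and f0: "f w = 0"
  and xi: "i < n"
  shows "gdist (U_adj n) (t,i) w = f (t,i)"
proof -
  have up: "\<And>t i. f (t,i) = k \<Longrightarrow> i < n \<Longrightarrow> walk_len (U_adj n) k (t,i) w" for k
  proof (induction k)
    case 0
    then show ?case using desc[of i t] by (cases "(t,i) = w") auto
  next
    case (Suc k)
    then have "(t,i) \<noteq> w" using f0 by auto
    then obtain y where y: "y \<in> set (nbrs n (t,i))" "f (t,i) = f y + 1" using desc Suc.prems by blast
    obtain s j where yy: "y = (s,j)" by (cases y)
    have "j < n" using nbrs_lt Suc.prems y yy by blast
    then have "walk_len (U_adj n) k y w" using Suc y yy by auto
    moreover have "U_adj n (t,i) y" using nbrs_adj Suc.prems y by blast
    ultimately show ?case unfolding walk_len.simps by blast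
  qed
  have low: "\<And>x. walk_len (U_adj n) k x w \<Longrightarrow> f x \<le> k" for k
  proof (induction k)
    case 0
    then show ?case using f0 by simp
  next
    case (Suc k)
    then obtain y where y: "U_adj n x y" "walk_len (U_adj n) k y w" by auto
    obtain s j where yy: "y = (s,j)" by (cases y)
    have "U_adj n (s,j) x" using adj_sym y yy by blast
    then obtain t' i' where x: "x = (t', i')" by (cases x)
    have "j < n \<and> x \<in> set (nbrs n (s,j))" using adj_nbrs \<open>U_adj n (s,j) x\<close> x by blast
    then have "f x \<le> f y + 1" using lip yy by blast
    moreover have "f y \<le> k" using Suc.IH y by blast
    ultimately show ?case by simp
  qed
  have w1: "walk_len (U_adj n) (f (t,i)) (t,i) w" using up xi by blast
  show ?thesis unfolding gdist_def
  proof (rule Least_equality)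
    show "walk_len (U_adj n) (f (t,i)) (t,i) w" by (rule w1)
  next
    fix k assume "walk_len (U_adj n) k (t,i) w"
    then show "f (t,i) \<le> k" by (rule low)
  qed
qed

definition cd :: "nat \<Rightarrow> nat \<Rightarrow> nat" where "cd n i = min i (n - i)"
definition md :: "nat \<Rightarrow> nat \<Rightarrow> nat" where "md n i = min i (n - 1 - i)"
definition kd :: "nat \<Rightarrow> nat \<Rightarrow> nat" where "kd n i = (if i = 0 then 0 else min (i - 1) (n - i))"
definition sp :: "nat \<Rightarrow> nat" where "sp x = (if x = 0 then 0 else if x = 1 then 2 else x + 2)"
definition spD :: "nat \<Rightarrow> nat" where "spD x = (if x = 0 then 1 else if x = 1 then 3 else x + 3)"

fun fA :: "nat \<Rightarrow> vkind \<times> nat \<Rightarrow> nat" where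
  "fA n (A, i) = cd n i"
| "fA n (B, i) = cd n i + 1"
| "fA n (C, i) = cd n i + 2"
| "fA n (D, i) = md n i + 3"
| "fA n (E, i) = md n i + 4"

fun fC :: "nat \<Rightarrow> vkind \<times> nat \<Rightarrow> nat" where
  "fC n (A, i) = cd n i + 2"
| "fC n (B, i) = cd n i + 1"
| "fC n (C, i) = sp (cd n i)"
| "fC n (D, i) = spD (md n i)"
| "fC n (E, i) = md n i + 2"

fun fD :: "nat \<Rightarrow> vkind \<times> nat \<Rightarrow> nat" where
  "fD n (A, i) = kd n i + 3"
| "fD n (B, i) = kd n i + 2"
| "fD n (C, i) = spD (kd n i)"
| "fD n (D, i) = sp (cd n i)"
| "fD n (E, i) = cd n i + 1"

lemmas adefs = cd_def md_def kd_def sp_def spD_def nxt_def prv_def min_def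

lemma fA_lip: "n \<ge> 3 \<Longrightarrow> i < n \<Longrightarrow> y \<in> set (nbrs n (t,i)) \<Longrightarrow> fA n y \<le> fA n (t,i) + 1"
  by (cases t) (auto simp: adefs)
lemma fC_lip: "n \<ge> 3 \<Longrightarrow> i < n \<Longrightarrow> y \<in> set (nbrs n (t,i)) \<Longrightarrow> fC n y \<le> fC n (t,i) + 1"
  by (cases t) (auto simp: adefs)
lemma fD_lip: "n \<ge> 3 \<Longrightarrow> i < n \<Longrightarrow> y \<in> set (nbrs n (t,i)) \<Longrightarrow> fD n y \<le> fD n (t,i) + 1"
  by (cases t) (auto simp: adefs)

lemma fA_desc: "n \<ge> 3 \<Longrightarrow> i < n \<Longrightarrow> (t,i) \<noteq> (A,0) \<Longrightarrow> \<exists>y\<in>set (nbrs n (t,i)). fA n (t,i) = fA n y + 1"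
  by (cases t; auto simp: adefs; arith)
lemma fC_desc: "n \<ge> 3 \<Longrightarrow> i < n \<Longrightarrow> (t,i) \<noteq> (C,0) \<Longrightarrow> \<exists>y\<in>set (nbrs n (t,i)). fC n (t,i) = fC n y + 1"
  by (cases t; auto simp: adefs; arith)
lemma fD_desc: "n \<ge> 3 \<Longrightarrow> i < n \<Longrightarrow> (t,i) \<noteq> (D,0) \<Longrightarrow> \<exists>y\<in>set (nbrs n (t,i)). fD n (t,i) = fD n y + 1"
  by (cases t; auto simp: adefs; arith)


definition rr :: "nat \<Rightarrow> nat \<Rightarrow> nat \<Rightarrow> nat" where
  "rr n p i = (if p \<le> i then i - p else i + n - p)"

lemma qA: assumes "n \<ge> 9" "n = 2*h+1 \<or> n = 2*h+2" "i < n"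
  shows "cd n i \<noteq> cd n (nxt n i) \<or> cd n (rr n h i) \<noteq> cd n (nxt n (rr n h i))"
proof (cases "2*i+1 = n")
  case True
  have "cd n (rr n h i) \<noteq> cd n (nxt n (rr n h i))" using True assms by (auto simp: adefs rr_def; arith)
  then show ?thesis by blast
next
  case False
  have "cd n i \<noteq> cd n (nxt n i)" using False assms by (auto simp: adefs; arith)
  then show ?thesis by blast
qed

lemma qE: assumes "n \<ge> 9" "n = 2*h+1 \<or> n = 2*h+2" "i < n"
  shows "md n i \<noteq> md n (nxt n i) \<or> md n (rr n h i) \<noteq> md n (nxt n (rr n h i))"
proof (cases "i+1 = n \<or> 2*i+2 = n")
  case True
  have "md n (rr n h i) \<noteq> md n (nxt n (rr n h i))" using True assms by (auto simp: adefs rr_def; arith)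
  then show ?thesis by blast
next
  case False
  have "md n i \<noteq> md n (nxt n i)" using False assms by (auto simp: adefs; arith)
  then show ?thesis by blast
qed

lemma qBC: assumes "n \<ge> 9" "n = 2*h+1 \<or> n = 2*h+2" "i < n"
  shows "cd n i + 1 \<noteq> sp (cd n i) \<or> cd n (rr n h i) + 1 \<noteq> sp (cd n (rr n h i))"
proof (cases "i = 1 \<or> i+1 = n")
  case True
  have "cd n (rr n h i) + 1 \<noteq> sp (cd n (rr n h i))" using True assms by (auto simp: adefs rr_def; arith)
  then show ?thesis by blast
next
  case False
  have "cd n i + 1 \<noteq> sp (cd n i)" using False assms by (auto simp: adefs; arith)
  then show ?thesis by blast
qed

lemma qCD: assumes "n \<ge> 9" "n = 2*h+1 \<or> n = 2*h+2" "i < n"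
  shows "sp (cd n i) \<noteq> spD (md n i) \<or> sp (cd n (rr n h i)) \<noteq> spD (md n (rr n h i))"
proof (cases "n \<le> 2*i \<and> i+3 \<le> n")
  case True
  have "sp (cd n (rr n h i)) \<noteq> spD (md n (rr n h i))" using True assms by (auto simp: adefs rr_def; arith)
  then show ?thesis by blast
next
  case False
  have "sp (cd n i) \<noteq> spD (md n i)" using False assms by (auto simp: adefs; arith)
  then show ?thesis by blast
qed

lemma qDE: assumes "n \<ge> 9" "n = 2*h+1 \<or> n = 2*h+2" "i < n"
  shows "spD (md n i) \<noteq> md n i + 2 \<or> spD (md n (rr n h i)) \<noteq> md n (rr n h i) + 2"
proof (cases "i = 1 \<or> i+2 = n")
  case True
  have "spD (md n (rr n h i)) \<noteq> md n (rr n h i) + 2" using True assms by (auto simp: adefs rr_def; arith)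
  then show ?thesis by blast
next
  case False
  have "spD (md n i) \<noteq> md n i + 2" using False assms by (auto simp: adefs; arith)
  then show ?thesis by blast
qed

lemma qDC: assumes "n \<ge> 9" "n = 2*h+1 \<or> n = 2*h+2" "i < n"
  shows "spD (md n i) \<noteq> sp (cd n (nxt n i)) \<or> spD (md n (rr n h i)) \<noteq> sp (cd n (nxt n (rr n h i)))"
proof (cases "2 \<le> i \<and> 2*i+2 \<le> n")
  case True
  have "spD (md n (rr n h i)) \<noteq> sp (cd n (nxt n (rr n h i)))" using True assms by (auto simp: adefs rr_def; arith)
  then show ?thesis by blast
next
  case False
  have "spD (md n i) \<noteq> sp (cd n (nxt n i))" using False assms by (auto simp: adefs; arith)
  then show ?thesis by blast
qed

definition ff :: "vkind \<Rightarrow> nat \<Rightarrow> vkind \<times> nat \<Rightarrow> nat" where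
  "ff X n x = (case X of A \<Rightarrow> fA n x | B \<Rightarrow> 0 | C \<Rightarrow> fC n x | D \<Rightarrow> fD n x | E \<Rightarrow> 0)"

definition rot :: "nat \<Rightarrow> vkind \<times> nat \<Rightarrow> vkind \<times> nat" where
  "rot n x = (fst x, if snd x < n then nxt n (snd x) else snd x)"
definition rotb :: "nat \<Rightarrow> vkind \<times> nat \<Rightarrow> vkind \<times> nat" where
  "rotb n x = (fst x, if snd x < n then prv n (snd x) else snd x)"

lemma rotb_rot[simp]: "rotb n (rot n x) = x"
  unfolding rot_def rotb_def by (cases x) (auto simp: nxt_lt)
lemma rot_rotb[simp]: "rot n (rotb n x) = x"
  unfolding rot_def rotb_def by (cases x) (auto simp: prv_lt)

lemma rot_adj: "U_adj n x y \<Longrightarrow> U_adj n (rot n x) (rot n y)"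
proof -
  assume a: "U_adj n x y"
  obtain t i where x: "x = (t,i)" by (cases x)
  obtain s j where yy: "y = (s,j)" by (cases y)
  have h: "i < n" "(s,j) \<in> set (nbrs n (t,i))" using adj_nbrs a x yy by blast+
  have "j < n" using nbrs_lt h by blast
  have "(s, nxt n j) \<in> set (nbrs n (t, nxt n i))" using h by (cases t) auto
  then have "U_adj n (t, nxt n i) (s, nxt n j)" using nbrs_adj nxt_lt h(1) by blast
  then show ?thesis using x yy h(1) \<open>j < n\<close> by (simp add: rot_def)
qed

lemma rotb_adj: "U_adj n x y \<Longrightarrow> U_adj n (rotb n x) (rotb n y)"
proof -
  assume a: "U_adj n x y"
  obtain t i where x: "x = (t,i)" by (cases x)
  obtain s j where yy: "y = (s,j)" by (cases y)
  have h: "i < n" "(s,j) \<in> set (nbrs n (t,i))" using adj_nbrs a x yy by blast+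
  have "j < n" using nbrs_lt h by blast
  have "(s, prv n j) \<in> set (nbrs n (t, prv n i))" using h by (cases t) auto
  then have "U_adj n (t, prv n i) (s, prv n j)" using nbrs_adj prv_lt h(1) by blast
  then show ?thesis using x yy h(1) \<open>j < n\<close> by (simp add: rotb_def)
qed

lemma walk_map:
  assumes "\<And>x y. Adj x y \<Longrightarrow> Adj (g x) (g y)"
  shows "walk_len Adj k u v \<Longrightarrow> walk_len Adj k (g u) (g v)"
proof (induction k arbitrary: u)
  case 0 then show ?case by simp
next
  case (Suc k)
  then obtain z where "Adj u z" "walk_len Adj k z v" by auto
  then have "Adj (g u) (g z)" "walk_len Adj k (g z) (g v)" using assms Suc.IH by blast+
  then show ?case by auto
qed

lemma gdist_rot: "gdist (U_adj n) (rot n u) (rot n v) = gdist (U_adj n) u v"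
proof -
  have "walk_len (U_adj n) k (rot n u) (rot n v) = walk_len (U_adj n) k u v" for k
  proof
    assume "walk_len (U_adj n) k (rot n u) (rot n v)"
    from walk_map[of "U_adj n" "rotb n", OF rotb_adj this] show "walk_len (U_adj n) k u v" by simp
  next
    assume "walk_len (U_adj n) k u v"
    from walk_map[of "U_adj n" "rot n", OF rot_adj this] show "walk_len (U_adj n) k (rot n u) (rot n v)" .
  qed
  then show ?thesis unfolding gdist_def by simp
qed

lemma gdist_pow: "gdist (U_adj n) ((rot n ^^ p) u) ((rot n ^^ p) v) = gdist (U_adj n) u v"
  by (induction p) (auto simp: gdist_rot)

lemma rot_pow: "i < n \<Longrightarrow> (rot n ^^ p) (t,i) = (t, (i + p) mod n)"
proof (induction p)
  case 0 then show ?case by simp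
next
  case (Suc p)
  have "(i + p) mod n < n" using Suc.prems by simp
  then have "rot n (t, (i + p) mod n) = (t, ((i + p) mod n + 1) mod n)"
    using mod_nxt[OF \<open>(i + p) mod n < n\<close>] by (simp add: rot_def)
  also have "((i + p) mod n + 1) mod n = (i + Suc p) mod n" by (simp add: mod_Suc_eq)
  finally show ?case using Suc by simp
qed

lemma rr_lt: "i < n \<Longrightarrow> p < n \<Longrightarrow> rr n p i < n" unfolding rr_def by auto
lemma rr_back: "i < n \<Longrightarrow> p < n \<Longrightarrow> (rr n p i + p) mod n = i" unfolding rr_def by auto

lemma gdist_shift:
  assumes "i < n" "p < n"
  shows "gdist (U_adj n) (t,i) (X,p) = gdist (U_adj n) (t, rr n p i) (X,0)"
proof -
  have "(rot n ^^ p) (t, rr n p i) = (t,i)" using rot_pow rr_lt rr_back assms by simp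
  moreover have "(rot n ^^ p) (X, 0) = (X,p)" using rot_pow assms by simp
  ultimately show ?thesis using gdist_pow[of n p "(t, rr n p i)" "(X,0)"] by simp
qed

lemma gdist_X0:
  assumes "X \<in> {A,C,D}" "n \<ge> 3" "i < n"
  shows "gdist (U_adj n) (t,i) (X,0) = ff X n (t,i)"
  using assms
proof (cases X)
  case A
  have "gdist (U_adj n) (t,i) (A,0) = fA n (t,i)"
    by (rule gdist_pot) (use fA_lip fA_desc assms in \<open>auto simp: adefs\<close>)
  then show ?thesis using A by (simp add: ff_def)
next
  case C
  have "gdist (U_adj n) (t,i) (C,0) = fC n (t,i)"
    by (rule gdist_pot) (use fC_lip fC_desc assms in \<open>auto simp: adefs\<close>)
  then show ?thesis using C by (simp add: ff_def)
next
  case D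
  have "gdist (U_adj n) (t,i) (D,0) = fD n (t,i)"
    by (rule gdist_pot) (use fD_lip fD_desc assms in \<open>auto simp: adefs\<close>)
  then show ?thesis using D by (simp add: ff_def)
qed auto

lemma gdist_X:
  assumes "X \<in> {A,C,D}" "n \<ge> 3" "i < n" "p < n"
  shows "gdist (U_adj n) (t,i) (X,p) = ff X n (t, rr n p i)"
proof -
  have "gdist (U_adj n) (t,i) (X,p) = gdist (U_adj n) (t, rr n p i) (X,0)"
    by (rule gdist_shift) (use assms in auto)
  also have "\<dots> = ff X n (t, rr n p i)"
    by (rule gdist_X0) (use assms rr_lt in auto)
  finally show ?thesis .
qed

lemma upper_from:
  assumes "X \<in> {A,C,D}" "Y \<in> {A,C,D}" "p < n" "q < n" "(X,p) \<noteq> (Y,q)" "n \<ge> 3"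
  and chk: "\<And>t i y. i < n \<Longrightarrow> y \<in> set (nbrs n (t,i)) \<Longrightarrow>
     ff X n (t, rr n p i) \<noteq> ff X n (fst y, rr n p (snd y)) \<or>
     ff Y n (t, rr n q i) \<noteq> ff Y n (fst y, rr n q (snd y))"
  shows "\<exists>W. finite W \<and> local_resolving_set (U_verts n) (U_adj n) W \<and> card W = 2"
proof (intro exI conjI)
  let ?W = "{(X,p),(Y,q)}"
  show "finite ?W" by simp
  show "card ?W = 2" using assms(5) by simp
  show "local_resolving_set (U_verts n) (U_adj n) ?W"
    unfolding local_resolving_set_def
  proof (intro conjI ballI impI)
    show "?W \<subseteq> U_verts n" using assms(3,4) by (auto simp: U_verts_def)
  next
    fix u v assume "u \<in> U_verts n" "v \<in> U_verts n" "U_adj n u v"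
    obtain t i where u: "u = (t,i)" by (cases u)
    obtain s j where v: "v = (s,j)" by (cases v)
    have h: "i < n" "(s,j) \<in> set (nbrs n (t,i))" using adj_nbrs \<open>U_adj n u v\<close> u v by blast+
    have "j < n" using nbrs_lt h by blast
    from chk[OF h] have "ff X n (t, rr n p i) \<noteq> ff X n (s, rr n p j) \<or>
       ff Y n (t, rr n q i) \<noteq> ff Y n (s, rr n q j)" by simp
    then show "\<exists>w\<in>?W. resolves (U_adj n) w u v"
      unfolding resolves_def u v
      using gdist_X[OF assms(1,6) h(1) assms(3)] gdist_X[OF assms(1,6) \<open>j<n\<close> assms(3)]
        gdist_X[OF assms(2,6) h(1) assms(4)] gdist_X[OF assms(2,6) \<open>j<n\<close> assms(4)]
      by auto
  qed
qed


lemma small3g: "\<forall>i\<in>set [0,1,2]. \<forall>t\<in>set [A,B,C,D,E]. \<forall>y\<in>set (nbrs 3 (t,i)).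
  ff A 3 (t, rr 3 0 i) \<noteq> ff A 3 (fst y, rr 3 0 (snd y)) \<or>
  ff A 3 (t, rr 3 1 i) \<noteq> ff A 3 (fst y, rr 3 1 (snd y))"
  by code_simp

lemma small3: "i < 3 \<Longrightarrow> y \<in> set (nbrs 3 (t,i)) \<Longrightarrow>
  ff A 3 (t, rr 3 0 i) \<noteq> ff A 3 (fst y, rr 3 0 (snd y)) \<or>
  ff A 3 (t, rr 3 1 i) \<noteq> ff A 3 (fst y, rr 3 1 (snd y))"
proof -
  assume "i < 3" and y: "y \<in> set (nbrs 3 (t,i))"
  then have "i \<in> set [0,1,2]" by auto
  moreover have "t \<in> set [A,B,C,D,E]" by (cases t) auto
  ultimately show ?thesis using small3g y by blast
qed

lemma small4g: "\<forall>i\<in>set [0,1,2,3]. \<forall>t\<in>set [A,B,C,D,E]. \<forall>y\<in>set (nbrs 4 (t,i)).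
  ff A 4 (t, rr 4 0 i) \<noteq> ff A 4 (fst y, rr 4 0 (snd y)) \<or>
  ff C 4 (t, rr 4 1 i) \<noteq> ff C 4 (fst y, rr 4 1 (snd y))"
  by code_simp

lemma small4: "i < 4 \<Longrightarrow> y \<in> set (nbrs 4 (t,i)) \<Longrightarrow>
  ff A 4 (t, rr 4 0 i) \<noteq> ff A 4 (fst y, rr 4 0 (snd y)) \<or>
  ff C 4 (t, rr 4 1 i) \<noteq> ff C 4 (fst y, rr 4 1 (snd y))"
proof -
  assume "i < 4" and y: "y \<in> set (nbrs 4 (t,i))"
  then have "i \<in> set [0,1,2,3]" by auto
  moreover have "t \<in> set [A,B,C,D,E]" by (cases t) auto
  ultimately show ?thesis using small4g y by blast
qed

lemma small5g: "\<forall>i\<in>set [0,1,2,3,4]. \<forall>t\<in>set [A,B,C,D,E]. \<forall>y\<in>set (nbrs 5 (t,i)).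
  ff A 5 (t, rr 5 0 i) \<noteq> ff A 5 (fst y, rr 5 0 (snd y)) \<or>
  ff C 5 (t, rr 5 1 i) \<noteq> ff C 5 (fst y, rr 5 1 (snd y))"
  by code_simp

lemma small5: "i < 5 \<Longrightarrow> y \<in> set (nbrs 5 (t,i)) \<Longrightarrow>
  ff A 5 (t, rr 5 0 i) \<noteq> ff A 5 (fst y, rr 5 0 (snd y)) \<or>
  ff C 5 (t, rr 5 1 i) \<noteq> ff C 5 (fst y, rr 5 1 (snd y))"
proof -
  assume "i < 5" and y: "y \<in> set (nbrs 5 (t,i))"
  then have "i \<in> set [0,1,2,3,4]" by auto
  moreover have "t \<in> set [A,B,C,D,E]" by (cases t) auto
  ultimately show ?thesis using small5g y by blast
qed

lemma small6g: "\<forall>i\<in>set [0,1,2,3,4,5]. \<forall>t\<in>set [A,B,C,D,E]. \<forall>y\<in>set (nbrs 6 (t,i)).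
  ff C 6 (t, rr 6 0 i) \<noteq> ff C 6 (fst y, rr 6 0 (snd y)) \<or>
  ff C 6 (t, rr 6 1 i) \<noteq> ff C 6 (fst y, rr 6 1 (snd y))"
  by code_simp

lemma small6: "i < 6 \<Longrightarrow> y \<in> set (nbrs 6 (t,i)) \<Longrightarrow>
  ff C 6 (t, rr 6 0 i) \<noteq> ff C 6 (fst y, rr 6 0 (snd y)) \<or>
  ff C 6 (t, rr 6 1 i) \<noteq> ff C 6 (fst y, rr 6 1 (snd y))"
proof -
  assume "i < 6" and y: "y \<in> set (nbrs 6 (t,i))"
  then have "i \<in> set [0,1,2,3,4,5]" by auto
  moreover have "t \<in> set [A,B,C,D,E]" by (cases t) auto
  ultimately show ?thesis using small6g y by blast
qed

lemma small7g: "\<forall>i\<in>set [0,1,2,3,4,5,6]. \<forall>t\<in>set [A,B,C,D,E]. \<forall>y\<in>set (nbrs 7 (t,i)).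
  ff C 7 (t, rr 7 0 i) \<noteq> ff C 7 (fst y, rr 7 0 (snd y)) \<or>
  ff C 7 (t, rr 7 1 i) \<noteq> ff C 7 (fst y, rr 7 1 (snd y))"
  by code_simp

lemma small7: "i < 7 \<Longrightarrow> y \<in> set (nbrs 7 (t,i)) \<Longrightarrow>
  ff C 7 (t, rr 7 0 i) \<noteq> ff C 7 (fst y, rr 7 0 (snd y)) \<or>
  ff C 7 (t, rr 7 1 i) \<noteq> ff C 7 (fst y, rr 7 1 (snd y))"
proof -
  assume "i < 7" and y: "y \<in> set (nbrs 7 (t,i))"
  then have "i \<in> set [0,1,2,3,4,5,6]" by auto
  moreover have "t \<in> set [A,B,C,D,E]" by (cases t) auto
  ultimately show ?thesis using small7g y by blast
qed

lemma small8g: "\<forall>i\<in>set [0,1,2,3,4,5,6,7]. \<forall>t\<in>set [A,B,C,D,E]. \<forall>y\<in>set (nbrs 8 (t,i)).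
  ff C 8 (t, rr 8 0 i) \<noteq> ff C 8 (fst y, rr 8 0 (snd y)) \<or>
  ff D 8 (t, rr 8 3 i) \<noteq> ff D 8 (fst y, rr 8 3 (snd y))"
  by code_simp

lemma small8: "i < 8 \<Longrightarrow> y \<in> set (nbrs 8 (t,i)) \<Longrightarrow>
  ff C 8 (t, rr 8 0 i) \<noteq> ff C 8 (fst y, rr 8 0 (snd y)) \<or>
  ff D 8 (t, rr 8 3 i) \<noteq> ff D 8 (fst y, rr 8 3 (snd y))"
proof -
  assume "i < 8" and y: "y \<in> set (nbrs 8 (t,i))"
  then have "i \<in> set [0,1,2,3,4,5,6,7]" by auto
  moreover have "t \<in> set [A,B,C,D,E]" by (cases t) auto
  ultimately show ?thesis using small8g y by blast
qed

lemma rr0: "i < n \<Longrightarrow> rr n 0 i = i" by (simp add: rr_def)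
lemma rr_nxt: "i < n \<Longrightarrow> h < n \<Longrightarrow> rr n h (nxt n i) = nxt n (rr n h i)"
  unfolding rr_def nxt_def by (auto; arith)

lemma arcP:
  assumes "n \<ge> 9" "n = 2*h+1 \<or> n = 2*h+2" "U_arc n (t,i) (s,j)"
  shows "fC n (t,i) \<noteq> fC n (s,j) \<or> fC n (t, rr n h i) \<noteq> fC n (s, rr n h j)"
proof -
  have hn: "h < n" using assms(1,2) by arith
  have H: "i < n \<and> j < n \<and>
     ((t = A \<and> s = A \<and> j = nxt n i)
    \<or> (t = B \<and> s = B \<and> j = nxt n i)
    \<or> (t = E \<and> s = E \<and> j = nxt n i)
    \<or> (t = A \<and> s = B \<and> j = i)
    \<or> (t = B \<and> s = C \<and> j = i)
    \<or> (t = C \<and> s = D \<and> j = i)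
    \<or> (t = D \<and> s = E \<and> j = i)
    \<or> (t = C \<and> s = D \<and> i = nxt n j))" using arc_simp[THEN iffD1, OF assms(3)] .
  then have ij: "i < n" "j < n" by auto
  from H show ?thesis
  proof (elim conjE disjE)
    assume "t = A" "s = A" "j = nxt n i"
    then show ?thesis using qA[OF assms(1,2) ij(1)] rr_nxt[OF ij(1) hn] by simp
  next
    assume "t = B" "s = B" "j = nxt n i"
    then show ?thesis using qA[OF assms(1,2) ij(1)] rr_nxt[OF ij(1) hn] by simp
  next
    assume "t = E" "s = E" "j = nxt n i"
    then show ?thesis using qE[OF assms(1,2) ij(1)] rr_nxt[OF ij(1) hn] by simp
  next
    assume "t = A" "s = B" "j = i"
    then show ?thesis by simp
  next
    assume "t = B" "s = C" "j = i"
    then show ?thesis using qBC[OF assms(1,2) ij(1)] by simp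
  next
    assume "t = C" "s = D" "j = i"
    then show ?thesis using qCD[OF assms(1,2) ij(1)] by simp
  next
    assume "t = D" "s = E" "j = i"
    then show ?thesis using qDE[OF assms(1,2) ij(1)] by simp
  next
    assume "t = C" "s = D" "i = nxt n j"
    then show ?thesis using qDC[OF assms(1,2) ij(2)] rr_nxt[OF ij(2) hn] by auto
  qed
qed

lemma upper_big:
  assumes "n \<ge> 9"
  shows "\<exists>W. finite W \<and> local_resolving_set (U_verts n) (U_adj n) W \<and> card W = 2"
proof -
  define h where "h = (n - 1) div 2"
  have hn: "n = 2*h+1 \<or> n = 2*h+2" unfolding h_def using assms by arith
  have "h < n" "0 < h" using hn assms by auto
  show ?thesis
  proof (rule upper_from[of C C 0 n h])
    fix t i y assume a: "i < n" "y \<in> set (nbrs n (t, i))"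
    obtain s j where yy: "y = (s,j)" by (cases y)
    have "j < n" using nbrs_lt a yy by blast
    have "U_adj n (t,i) (s,j)" using nbrs_adj a yy by blast
    then have "U_arc n (t,i) (s,j) \<or> U_arc n (s,j) (t,i)" unfolding U_adj_def .
    then have "fC n (t,i) \<noteq> fC n (s,j) \<or> fC n (t, rr n h i) \<noteq> fC n (s, rr n h j)"
      using arcP[OF assms hn, of t i s j] arcP[OF assms hn, of s j t i] by auto
    then show "ff C n (t, rr n 0 i) \<noteq> ff C n (fst y, rr n 0 (snd y)) \<or>
       ff C n (t, rr n h i) \<noteq> ff C n (fst y, rr n h (snd y))"
      using a \<open>j < n\<close> yy by (simp add: ff_def rr0)
  qed (use assms \<open>h < n\<close> \<open>0 < h\<close> in auto)
qed

lemma upper: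
  assumes "n \<ge> 3"
  shows "\<exists>W. finite W \<and> local_resolving_set (U_verts n) (U_adj n) W \<and> card W = 2"
proof -
  have "n = 3 \<or> n = 4 \<or> n = 5 \<or> n = 6 \<or> n = 7 \<or> n = 8 \<or> n \<ge> 9" using assms by arith
  then show ?thesis
  proof (elim disjE)
    assume "n = 3" then show ?thesis using upper_from[of A A 0 3 1] small3 by auto
  next
    assume "n = 4" then show ?thesis using upper_from[of A C 0 4 1] small4 by auto
  next
    assume "n = 5" then show ?thesis using upper_from[of A C 0 5 1] small5 by auto
  next
    assume "n = 6" then show ?thesis using upper_from[of C C 0 6 1] small6 by auto
  next
    assume "n = 7" then show ?thesis using upper_from[of C C 0 7 1] small7 by auto
  next
    assume "n = 8" then show ?thesis using upper_from[of C D 0 8 3] small8 by auto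
  next
    assume "n \<ge> 9" then show ?thesis using upper_big by blast
  qed
qed

lemma gd_le:
  assumes "walk_len Adj k y w" "Adj x y"
  shows "gdist Adj x w \<le> Suc (gdist Adj y w)"
proof -
  have "walk_len Adj (gdist Adj y w) y w" unfolding gdist_def by (rule LeastI) (rule assms(1))
  then have "walk_len Adj (Suc (gdist Adj y w)) x w" using assms(2) by auto
  then show ?thesis unfolding gdist_def by (rule Least_le)
qed

lemma reach_step: "walk_len Adj k y w \<Longrightarrow> Adj x y \<Longrightarrow> walk_len Adj (Suc k) x w"
  by auto

lemma odd5:
  assumes sym: "\<And>x y. Adj x y \<Longrightarrow> Adj y x"
  and e: "Adj x1 x2" "Adj x2 x3" "Adj x3 x4" "Adj x4 x5" "Adj x5 x1"
  and r: "resolves Adj w x1 x2" "resolves Adj w x2 x3" "resolves Adj w x3 x4"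
         "resolves Adj w x4 x5" "resolves Adj w x5 x1"
  shows False
proof (cases "\<exists>k. walk_len Adj k x1 w")
  case True
  then obtain k1 where k1: "walk_len Adj k1 x1 w" by blast
  obtain k5 where k5: "walk_len Adj k5 x5 w" using reach_step[OF k1 e(5)] by blast
  obtain k4 where k4: "walk_len Adj k4 x4 w" using reach_step[OF k5 e(4)] by blast
  obtain k3 where k3: "walk_len Adj k3 x3 w" using reach_step[OF k4 e(3)] by blast
  obtain k2 where k2: "walk_len Adj k2 x2 w" using reach_step[OF k3 e(2)] by blast
  note g = gd_le[OF k2 e(1)] gd_le[OF k3 e(2)] gd_le[OF k4 e(3)] gd_le[OF k5 e(4)] gd_le[OF k1 e(5)]
    gd_le[OF k1 sym[OF e(1)]] gd_le[OF k2 sym[OF e(2)]] gd_le[OF k3 sym[OF e(3)]]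
    gd_le[OF k4 sym[OF e(4)]] gd_le[OF k5 sym[OF e(5)]]
  show False using g r unfolding resolves_def by arith
next
  case False
  have "\<not> walk_len Adj k x2 w" for k
  proof
    assume a: "walk_len Adj k x2 w"
    from reach_step[OF a e(1)] False show False by blast
  qed
  then have "gdist Adj x1 w = gdist Adj x2 w" using False unfolding gdist_def by metis
  then show False using r(1) unfolding resolves_def by simp
qed

lemma lower:
  assumes "n \<ge> 3" "finite W" "local_resolving_set (U_verts n) (U_adj n) W"
  shows "2 \<le> card W"
proof (rule ccontr)
  assume "\<not> 2 \<le> card W"
  then have "card W = 0 \<or> card W = 1" by arith
  have V: "(t, i) \<in> U_verts n" if "i < n" for t i using that by (simp add: U_verts_def)
  have n1: "nxt n 0 = 1" "prv n 1 = 0" using assms(1) by (auto simp: nxt_def prv_def)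
  have adj: "U_adj n (B,0) (C,0)" "U_adj n (C,0) (D,0)" "U_adj n (D,0) (C,1)"
    "U_adj n (C,1) (B,1)" "U_adj n (B,1) (B,0)" "U_adj n (A,0) (B,0)"
    using assms(1) n1 by (auto intro!: nbrs_adj)
  have res: "\<exists>w\<in>W. resolves (U_adj n) w u v" if "U_adj n u v" "u \<in> U_verts n" "v \<in> U_verts n" for u v
    using assms(3) that unfolding local_resolving_set_def by blast
  show False
  proof (cases "card W = 0")
    case True
    then have "W = {}" using assms(2) by simp
    then show False using res[OF adj(6)] V assms(1) by auto
  next
    case False
    then have "card W = 1" using \<open>card W = 0 \<or> card W = 1\<close> by simp
    then obtain w where W: "W = {w}" by (rule card_1_singletonE)
    have "resolves (U_adj n) w (B,0) (C,0)" "resolves (U_adj n) w (C,0) (D,0)"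
      "resolves (U_adj n) w (D,0) (C,1)" "resolves (U_adj n) w (C,1) (B,1)"
      "resolves (U_adj n) w (B,1) (B,0)"
      using res[OF adj(1)] res[OF adj(2)] res[OF adj(3)] res[OF adj(4)] res[OF adj(5)]
        V assms(1) W by auto
    then show False using odd5[OF adj_sym adj(1-5)] by blast
  qed
qed

theorem theorem4p1:
  fixes n :: nat
  assumes "n \<ge> 3"
  shows "lmd (U_verts n) (U_adj n) = 2"
  unfolding lmd_def
proof (rule Least_equality)
  show "\<exists>W. finite W \<and> local_resolving_set (U_verts n) (U_adj n) W \<and> card W = 2"
    using upper assms by blast
next
  fix k assume "\<exists>W. finite W \<and> local_resolving_set (U_verts n) (U_adj n) W \<and> card W = k"
  then show "2 \<le> k" using lower assms by blast
qed

end
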